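(* Let $X$ be a shift space and $m\ge1$. The following are equivalent: (i) $X$ is eventually dendric with threshold $m$; (ii) the graph $\mathcal E_n(w)$ is a tree for every $n\ge1$ and every $w\in\mathcal L_{\ge m}(X)$; (iii) there is an integer $n\ge1$ such that $\mathcal E_n(w)$ is a tree for every $w\in\mathcal L_{\ge m}(X)$.
   Context: $A$ is a finite alphabet; a shift space is a closed shift-invariant subset $X\subseteq A^{\mathbb Z}$; $\mathcal L(X)$ is its set of finite factors, $\mathcal L_n(X)=\mathcal L(X)\cap A^n$, $\mathcal L_{\ge n}(X)=\bigcup_{k\ge n}\mathcal L_k(X)$. For $w\in\mathcal L(X)$ and $n\ge1$: $L_n(w)=\{u\in\mathcal L_n(X):uw\in\mathcal L(X)\}$, $R_n(w)=\{v\in\mathcal L_n(X):wv\in\mathcal L(X)\}$, and the extension graph $\mathcal E_n(w)$ is the undirected bipartite graph with vertex set the disjoint union of $L_n(w)$ and $R_n(w)$ and an edge $(u,v)$ iff $uwv\in\mathcal L(X)$. $X$ is eventually dendric with threshold $m$ if $\mathcal E_1(w)$ is a tree for every $w\in\mathcal L_{\ge m}(X)$. *)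

theory Defs
  imports "HOL-Analysis.Analysis"
begin

definition shift :: "(int \<Rightarrow> 'a) \<Rightarrow> (int \<Rightarrow> 'a)" where
  "shift x = (\<lambda>i. x (i + 1))"

definition shift_space :: "'a set \<Rightarrow> (int \<Rightarrow> 'a) set \<Rightarrow> bool" where
  "shift_space A X \<longleftrightarrow> finite A \<and>
     X \<subseteq> PiE UNIV (\<lambda>_. A) \<and>
     closedin (product_topology (\<lambda>_::int. discrete_topology A) UNIV) X \<and>
     shift ` X = X"

text \<open>Finite factors (words are lists); the empty word is included.\<close>
definition lang :: "(int \<Rightarrow> 'a) set \<Rightarrow> 'a list set" where
  "lang X = {w. \<exists>x\<in>X. \<exists>i::int. w = map (\<lambda>k. x (i + int k)) [0..<length w]}"

definition lang_ge :: "(int \<Rightarrow> 'a) set \<Rightarrow> nat \<Rightarrow> 'a list set" where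
  "lang_ge X n = {w \<in> lang X. length w \<ge> n}"

definition left_ext :: "(int \<Rightarrow> 'a) set \<Rightarrow> nat \<Rightarrow> 'a list \<Rightarrow> 'a list set" where
  "left_ext X n w = {u \<in> lang X. length u = n \<and> u @ w \<in> lang X}"

definition right_ext :: "(int \<Rightarrow> 'a) set \<Rightarrow> nat \<Rightarrow> 'a list \<Rightarrow> 'a list set" where
  "right_ext X n w = {v \<in> lang X. length v = n \<and> w @ v \<in> lang X}"

text \<open>Simple undirected graphs given by a vertex set V and a (symmetric) adjacency relation.\<close>
definition graph_connected :: "'v set \<Rightarrow> ('v \<Rightarrow> 'v \<Rightarrow> bool) \<Rightarrow> bool" where
  "graph_connected V E \<longleftrightarrow> V \<noteq> {} \<and>
     (\<forall>x\<in>V. \<forall>y\<in>V. (x, y) \<in> {(p, q). p \<in> V \<and> q \<in> V \<and> E p q}\<^sup>*)"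

definition graph_has_cycle :: "'v set \<Rightarrow> ('v \<Rightarrow> 'v \<Rightarrow> bool) \<Rightarrow> bool" where
  "graph_has_cycle V E \<longleftrightarrow> (\<exists>cs. length cs \<ge> 3 \<and> distinct cs \<and> set cs \<subseteq> V \<and>
     (\<forall>i < length cs - 1. E (cs ! i) (cs ! Suc i)) \<and> E (last cs) (hd cs))"

definition is_tree :: "'v set \<Rightarrow> ('v \<Rightarrow> 'v \<Rightarrow> bool) \<Rightarrow> bool" where
  "is_tree V E \<longleftrightarrow> graph_connected V E \<and> \<not> graph_has_cycle V E"

text \<open>Extension graph E_n(w): vertices Inl ` L_n(w) (left) and Inr ` R_n(w) (right),
  edge between u and v iff u w v is in the language.\<close>
definition ext_vertices :: "(int \<Rightarrow> 'a) set \<Rightarrow> nat \<Rightarrow> 'a list \<Rightarrow> ('a list + 'a list) set" where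
  "ext_vertices X n w = Inl ` left_ext X n w \<union> Inr ` right_ext X n w"

definition ext_edge :: "(int \<Rightarrow> 'a) set \<Rightarrow> nat \<Rightarrow> 'a list \<Rightarrow> ('a list + 'a list) \<Rightarrow> ('a list + 'a list) \<Rightarrow> bool" where
  "ext_edge X n w p q \<longleftrightarrow>
     (\<exists>u v. u \<in> left_ext X n w \<and> v \<in> right_ext X n w \<and> u @ w @ v \<in> lang X \<and>
        ((p = Inl u \<and> q = Inr v) \<or> (p = Inr v \<and> q = Inl u)))"

definition ext_graph_is_tree :: "(int \<Rightarrow> 'a) set \<Rightarrow> nat \<Rightarrow> 'a list \<Rightarrow> bool" where
  "ext_graph_is_tree X n w \<longleftrightarrow> is_tree (ext_vertices X n w) (ext_edge X n w)"

definition eventually_dendric :: "(int \<Rightarrow> 'a) set \<Rightarrow> nat \<Rightarrow> bool" where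
  "eventually_dendric X m \<longleftrightarrow> (\<forall>w \<in> lang_ge X m. ext_graph_is_tree X 1 w)"

end

theory Submission
  imports Defs "HOL-Library.Transitive_Closure_Table"
begin


lemma sym_rt:
  assumes "\<And>p q. (p,q) \<in> S \<Longrightarrow> (q,p) \<in> S" "(a,b) \<in> S\<^sup>*"
  shows "(b,a) \<in> S\<^sup>*"
  using assms(2)
  by (induction rule: rtrancl_induct) (auto intro: converse_rtrancl_into_rtrancl assms(1))

locale fgraph =
  fixes V :: "'v set" and E :: "'v \<Rightarrow> 'v \<Rightarrow> bool"
  assumes finV: "finite V" and inV: "\<And>p q. E p q \<Longrightarrow> p \<in> V \<and> q \<in> V \<and> p \<noteq> q"
    and symE: "\<And>p q. E p q \<Longrightarrow> E q p"
begin

definition "S = {(p,q). p\<in>V \<and> q\<in>V \<and> E p q}"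
definition "Ed = {{p,q}|p q. E p q}"

lemma Ed_mem: "e \<in> Ed \<longleftrightarrow> (\<exists>p q. e = {p,q} \<and> E p q)"
  unfolding Ed_def by blast

lemma finEd: "finite Ed"
proof -
  have "Ed \<subseteq> Pow V" unfolding Ed_def using inV by auto
  then show ?thesis using finV by (meson finite_Pow_iff finite_subset)
qed

lemma cycle_of_nonbridge:
  assumes exy: "E x y" and p: "(y,x) \<in> {(p,q). E p q \<and> {p,q} \<noteq> {x,y}}\<^sup>*"
  shows "graph_has_cycle V E"
proof -
  define R' where "R' = (\<lambda>p q. E p q \<and> {p,q} \<noteq> {x,y})"
  have "R'\<^sup>*\<^sup>* y x" using p unfolding R'_def by (simp add: rtranclp_rtrancl_eq)
  then obtain xs where "rtrancl_path R' y xs x" using rtranclp_eq_rtrancl_path by metis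
  then obtain xs' where pa: "rtrancl_path R' y xs' x" and di: "distinct (y # xs')"
    using rtrancl_path_distinct by metis
  have xy: "x \<noteq> y" using inV[OF exy] by auto
  have ne: "xs' \<noteq> []" using pa xy by (auto elim: rtrancl_path.cases)
  have lst: "last xs' = x" using rtrancl_path_last[OF pa ne] .
  have len: "length xs' \<ge> 2"
  proof (rule ccontr)
    assume "\<not> length xs' \<ge> 2"
    with ne obtain z where z: "xs' = [z]" by (cases xs'; cases "tl xs'") auto
    with lst have "z = x" by simp
    with z pa have "R' y x" by (auto elim: rtrancl_path.cases)
    then show False unfolding R'_def by auto
  qed
  let ?cs = "y # xs'"
  have "length ?cs \<ge> 3" using len by simp
  moreover have "distinct ?cs" by fact
  moreover have "set ?cs \<subseteq> V"
  proof
    fix z assume "z \<in> set ?cs"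
    then consider "z = y" | "z \<in> set xs'" by auto
    then show "z \<in> V"
    proof cases
      case 1 then show ?thesis using inV[OF exy] by auto
    next
      case 2
      then have "Rangep R' z" using rtrancl_path_Range[OF pa] by auto
      then show ?thesis unfolding R'_def using inV by auto
    qed
  qed
  moreover have "\<forall>i < length ?cs - 1. E (?cs ! i) (?cs ! Suc i)"
  proof (intro allI impI)
    fix i assume "i < length ?cs - 1"
    then have "i < length xs'" by simp
    from rtrancl_path_nth[OF pa this] show "E (?cs ! i) (?cs ! Suc i)"
      unfolding R'_def by simp
  qed
  moreover have "E (last ?cs) (hd ?cs)" using lst ne exy by simp
  ultimately show ?thesis unfolding graph_has_cycle_def by blast
qed

definition dist where "dist r x = (LEAST n. (r,x) \<in> S ^^ n)"
definition par where "par r x = (SOME p. E p x \<and> Suc (dist r p) = dist r x)"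

context
  fixes r assumes conn: "graph_connected V E" and rV: "r \<in> V"
begin

lemma reach: "x \<in> V \<Longrightarrow> (r,x) \<in> S\<^sup>*"
  using conn rV unfolding graph_connected_def S_def by blast

lemma dist_pow: "x \<in> V \<Longrightarrow> (r,x) \<in> S ^^ dist r x"
  unfolding dist_def using reach rtrancl_power by (metis (no_types, lifting) LeastI)

lemma dist_le: "(r,x) \<in> S ^^ n \<Longrightarrow> dist r x \<le> n"
  unfolding dist_def by (rule Least_le)

lemma par_ex: assumes "x \<in> V" "x \<noteq> r" shows "\<exists>p. E p x \<and> Suc (dist r p) = dist r x"
proof -
  have dx: "(r,x) \<in> S ^^ dist r x" using dist_pow[OF assms(1)] .
  have "dist r x \<noteq> 0" using dx assms by (cases "dist r x") auto
  then obtain d where d: "dist r x = Suc d" by (cases "dist r x") auto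
  with dx obtain p where rp: "(r,p) \<in> S ^^ d" and px: "(p,x) \<in> S" by auto
  have "dist r p \<le> d" using dist_le[OF rp] .
  moreover have "\<not> dist r p < d"
  proof
    assume lt: "dist r p < d"
    have pV: "p \<in> V" using px unfolding S_def by auto
    have "(r,x) \<in> S ^^ Suc (dist r p)" using dist_pow[OF pV] px by auto
    then have "dist r x \<le> Suc (dist r p)" by (rule dist_le)
    with lt d show False by simp
  qed
  ultimately have "dist r p = d" by simp
  then show ?thesis using px d unfolding S_def by auto
qed

lemma par: assumes "x \<in> V" "x \<noteq> r" shows "E (par r x) x" "Suc (dist r (par r x)) = dist r x"
  using someI_ex[OF par_ex[OF assms]] unfolding par_def by auto

lemma to_root:
  assumes T: "\<And>x. x \<in> V \<Longrightarrow> x \<noteq> r \<Longrightarrow> (x, par r x) \<in> T"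
  shows "x \<in> V \<Longrightarrow> (x,r) \<in> T\<^sup>*"
proof (induction "dist r x" arbitrary: x rule: less_induct)
  case less
  show ?case
  proof (cases "x = r")
    case True then show ?thesis by simp
  next
    case False
    have pV: "par r x \<in> V" using par(1)[OF less.prems False] inV by auto
    have "(par r x, r) \<in> T\<^sup>*"
      using less.hyps[OF _ pV] par(2)[OF less.prems False] by simp
    then show ?thesis using T[OF less.prems False] by (meson converse_rtrancl_into_rtrancl)
  qed
qed

lemma T3r: "card V \<le> card Ed + 1"
proof -
  let ?g = "\<lambda>x. {x, par r x}"
  have inj: "inj_on ?g (V - {r})"
  proof (rule inj_onI)
    fix x y assume x: "x \<in> V - {r}" and y: "y \<in> V - {r}" and eq: "?g x = ?g y"
    show "x = y"
    proof (rule ccontr)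
      assume "x \<noteq> y"
      with eq have e1: "x = par r y" and e2: "y = par r x" by (auto simp: doubleton_eq_iff)
      have xV: "x \<in> V" "x \<noteq> r" and yV: "y \<in> V" "y \<noteq> r" using x y by auto
      have d1: "Suc (dist r (par r y)) = dist r y" using par(2)[OF yV] .
      have d2: "Suc (dist r (par r x)) = dist r x" using par(2)[OF xV] .
      from d1 e1 have "Suc (dist r x) = dist r y" by simp
      moreover from d2 e2 have "Suc (dist r y) = dist r x" by simp
      ultimately show False by linarith
    qed
  qed
  have "?g ` (V - {r}) \<subseteq> Ed"
    unfolding Ed_def using par(1) by blast
  then have "card (V - {r}) \<le> card Ed"
    using card_inj_on_le[OF inj _ finEd] by blast
  then show ?thesis using rV finV by (simp add: card_Diff_singleton)
qed

lemma T1r: assumes nc: "\<not> graph_has_cycle V E" shows "card Ed + 1 \<le> card V"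
proof -
  let ?g = "\<lambda>x. {x, par r x}"
  have sub: "Ed \<subseteq> ?g ` (V - {r})"
  proof
    fix e assume "e \<in> Ed"
    then obtain x y where e: "e = {x,y}" and exy: "E x y" unfolding Ed_def by auto
    show "e \<in> ?g ` (V - {r})"
    proof (rule ccontr)
      assume nin: "e \<notin> ?g ` (V - {r})"
      let ?T = "{(p,q). E p q \<and> {p,q} \<noteq> {x,y}}"
      have T: "(z, par r z) \<in> ?T" if "z \<in> V" "z \<noteq> r" for z
      proof -
        have "E z (par r z)" using symE par(1)[OF that] by blast
        moreover have "{z, par r z} \<noteq> {x,y}" using nin e that by auto
        moreover have "{z, par r z} = {par r z, z}" by auto
        ultimately show ?thesis by auto
      qed
      have symT: "(q,p) \<in> ?T" if "(p,q) \<in> ?T" for p q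
        using that symE by (auto simp: insert_commute)
      have xV: "x \<in> V" and yV: "y \<in> V" using inV[OF exy] by auto
      have "(x,r) \<in> ?T\<^sup>*" "(y,r) \<in> ?T\<^sup>*" using to_root[OF T] xV yV by auto
      then have "(y,x) \<in> ?T\<^sup>*" using sym_rt[OF symT] by (meson rtrancl_trans)
      then have "graph_has_cycle V E" using cycle_of_nonbridge[OF exy] by simp
      with nc show False by simp
    qed
  qed
  have "card Ed \<le> card (?g ` (V - {r}))"
    using card_mono[OF finite_imageI sub] finV by auto
  also have "\<dots> \<le> card (V - {r})" using card_image_le finV by blast
  finally have "card Ed \<le> card (V - {r})" .
  moreover have "card (V - {r}) = card V - 1" using card_Diff_singleton[OF rV] .
  moreover have "card V \<noteq> 0" using rV finV by auto
  ultimately show ?thesis by linarith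
qed

end

lemma T3: assumes "graph_connected V E" shows "card V \<le> card Ed + 1"
  using T3r assms unfolding graph_connected_def by blast

lemma T1: assumes "graph_connected V E" "\<not> graph_has_cycle V E" shows "card Ed + 1 \<le> card V"
  using T1r assms unfolding graph_connected_def by blast

end

lemma T2:
  assumes g: "fgraph V E" and conn: "graph_connected V E" and cyc: "graph_has_cycle V E"
  shows "card V \<le> card (fgraph.Ed E)"
proof -
  interpret fgraph V E by fact
  obtain cs where len: "length cs \<ge> 3" and di: "distinct cs" and sV: "set cs \<subseteq> V"
    and st: "\<forall>i < length cs - 1. E (cs ! i) (cs ! Suc i)" and cl: "E (last cs) (hd cs)"
    using cyc unfolding graph_has_cycle_def by blast
  define a where "a = last cs"
  define b where "b = hd cs"
  define E0 where "E0 = (\<lambda>p q. E p q \<and> {p,q} \<noteq> {a,b})"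
  interpret g0: fgraph V E0
    by unfold_locales (auto simp: E0_def inV finV insert_commute dest: symE)
  let ?S0 = "{(p,q). p\<in>V \<and> q\<in>V \<and> E0 p q}"
  have ne: "cs \<noteq> []" using len by auto
  have a: "a = cs ! (length cs - 1)" unfolding a_def using ne by (simp add: last_conv_nth)
  have b: "b = cs ! 0" unfolding b_def using ne by (simp add: hd_conv_nth)
  have path: "(cs ! 0, cs ! i) \<in> ?S0\<^sup>*" if "i < length cs" for i
    using that
  proof (induction i)
    case 0 then show ?case by simp
  next
    case (Suc i)
    have E: "E (cs ! i) (cs ! Suc i)" using st Suc.prems by auto
    have "{cs ! i, cs ! Suc i} \<noteq> {a,b}"
    proof
      assume eq: "{cs ! i, cs ! Suc i} = {a,b}"
      have il: "i < length cs" "Suc i < length cs" "length cs - 1 < length cs" "0 < length cs"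
        using Suc.prems by auto
      from eq consider "cs ! i = a \<and> cs ! Suc i = b" | "cs ! i = b \<and> cs ! Suc i = a"
        by (auto simp: doubleton_eq_iff)
      then show False
      proof cases
        case 1
        then have "i = length cs - 1" using a nth_eq_iff_index_eq[OF di il(1) il(3)] by simp
        with Suc.prems show False by simp
      next
        case 2
        then have "i = 0" "Suc i = length cs - 1"
          using a b nth_eq_iff_index_eq[OF di il(1) il(4)] nth_eq_iff_index_eq[OF di il(2) il(3)]
          by auto
        with len show False by simp
      qed
    qed
    then have "(cs ! i, cs ! Suc i) \<in> ?S0" using E inV unfolding E0_def by auto
    with Suc show ?case by (meson Suc_lessD rtrancl.rtrancl_into_rtrancl)
  qed
  have ba: "(b,a) \<in> ?S0\<^sup>*" using path[of "length cs - 1"] a b ne by simp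
  have symS0: "(q,p) \<in> ?S0" if "(p,q) \<in> ?S0" for p q
    using that symE by (auto simp: E0_def insert_commute)
  have ab: "(a,b) \<in> ?S0\<^sup>*" using sym_rt[OF symS0 ba] .
  have "{(p,q). p\<in>V \<and> q\<in>V \<and> E p q} \<subseteq> ?S0\<^sup>*"
  proof
    fix pq assume "pq \<in> {(p,q). p\<in>V \<and> q\<in>V \<and> E p q}"
    then obtain p q where pq: "pq = (p,q)" "p \<in> V" "q \<in> V" "E p q" by auto
    show "pq \<in> ?S0\<^sup>*"
    proof (cases "{p,q} = {a,b}")
      case True
      then have "(p,q) = (a,b) \<or> (p,q) = (b,a)" by (auto simp: doubleton_eq_iff)
      then show ?thesis using ab ba pq by auto
    next
      case False
      then show ?thesis using pq unfolding E0_def by auto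
    qed
  qed
  then have "{(p,q). p\<in>V \<and> q\<in>V \<and> E p q}\<^sup>* \<subseteq> ?S0\<^sup>*" by (rule rtrancl_subset_rtrancl)
  then have conn0: "graph_connected V E0" using conn unfolding graph_connected_def by blast
  have "card V \<le> card g0.Ed + 1" using g0.T3[OF conn0] .
  moreover have "g0.Ed = Ed - {{a,b}}"
    proof (rule set_eqI)
    fix e show "e \<in> g0.Ed \<longleftrightarrow> e \<in> Ed - {{a,b}}"
      unfolding g0.Ed_mem unfolding E0_def using Ed_mem[of e] by blast
  qed
  ultimately have cV: "card V \<le> card (Ed - {{a,b}}) + 1" by simp
  have eab: "E a b" using cl unfolding a_def b_def .
  then have abE: "{a,b} \<in> Ed" using Ed_mem[of "{a,b}"] by blast
  have c1: "card (Ed - {{a,b}}) = card Ed - 1" using card_Diff_singleton[OF abE] .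
  have c2: "card Ed \<noteq> 0" using abE finEd by auto
  from cV c1 c2 show ?thesis by linarith
qed

lemma GL:
  assumes g: "fgraph V E" and conn: "graph_connected V E"
  shows "is_tree V E \<longleftrightarrow> card (fgraph.Ed E) + 1 = card V"
proof -
  interpret fgraph V E by fact
  show ?thesis
  proof
    assume "is_tree V E"
    then have "\<not> graph_has_cycle V E" unfolding is_tree_def by simp
    then show "card Ed + 1 = card V" using T1[OF conn] T3[OF conn] by simp
  next
    assume c: "card Ed + 1 = card V"
    have "\<not> graph_has_cycle V E" using T2[OF g conn] c by auto
    then show "is_tree V E" using conn unfolding is_tree_def by simp
  qed
qed




lemma lang_iff: "w \<in> lang X \<longleftrightarrow> (\<exists>x\<in>X. \<exists>i. \<forall>k<length w. w ! k = x (i + int k))"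
proof
  assume "w \<in> lang X"
  then obtain x i where "x \<in> X" "w = map (\<lambda>k. x (i + int k)) [0..<length w]"
    unfolding lang_def by blast
  then show "\<exists>x\<in>X. \<exists>i. \<forall>k<length w. w ! k = x (i + int k)"
  proof -
    have "\<forall>k<length w. w ! k = x (i + int k)"
    proof (intro allI impI)
      fix k assume k: "k < length w"
      have "w ! k = map (\<lambda>k. x (i + int k)) [0..<length w] ! k" using \<open>w = _\<close> by simp
      also have "\<dots> = x (i + int k)" using k by simp
      finally show "w ! k = x (i + int k)" .
    qed
    then show ?thesis using \<open>x \<in> X\<close> by blast
  qed
next
  assume "\<exists>x\<in>X. \<exists>i. \<forall>k<length w. w ! k = x (i + int k)"
  then obtain x i where "x \<in> X" "\<forall>k<length w. w ! k = x (i + int k)" by blast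
  then have "w = map (\<lambda>k. x (i + int k)) [0..<length w]"
    by (intro nth_equalityI) auto
  then show "w \<in> lang X" unfolding lang_def using \<open>x \<in> X\<close> by blast
qed

lemma lang_fac: "xs @ ys @ zs \<in> lang X \<Longrightarrow> ys \<in> lang X"
proof -
  assume "xs @ ys @ zs \<in> lang X"
  then obtain x i where x: "x \<in> X" and h: "\<forall>k<length (xs @ ys @ zs). (xs @ ys @ zs) ! k = x (i + int k)"
    unfolding lang_iff by blast
  have "\<forall>k<length ys. ys ! k = x ((i + int (length xs)) + int k)"
  proof (intro allI impI)
    fix k assume k: "k < length ys"
    have "length xs + k < length (xs @ ys @ zs)" using k by simp
    from h[rule_format, OF this]
    have "(xs @ ys @ zs) ! (length xs + k) = x (i + int (length xs + k))" .
    then show "ys ! k = x ((i + int (length xs)) + int k)" using k by (simp add: nth_append add.assoc)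
  qed
  then show ?thesis unfolding lang_iff using x by blast
qed

lemma lang_infix: "ws \<in> lang X \<Longrightarrow> ws = xs @ ys @ zs \<Longrightarrow> ys \<in> lang X"
  using lang_fac by blast

lemma lang_pre: "xs @ ys \<in> lang X \<Longrightarrow> xs \<in> lang X"
  using lang_fac[of "[]" xs ys] by simp

lemma lang_suf: "xs @ ys \<in> lang X \<Longrightarrow> ys \<in> lang X"
  using lang_fac[of xs ys "[]"] by simp

lemma lang_extR: "w \<in> lang X \<Longrightarrow> \<exists>a. w @ [a] \<in> lang X"
proof -
  assume "w \<in> lang X"
  then obtain x i where x: "x \<in> X" and h: "\<forall>k<length w. w ! k = x (i + int k)"
    unfolding lang_iff by blast
  have "\<forall>k<length (w @ [x (i + int (length w))]). (w @ [x (i + int (length w))]) ! k = x (i + int k)"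
  proof (intro allI impI)
    fix k assume "k < length (w @ [x (i + int (length w))])"
    then have "k < length w \<or> k = length w" by auto
    then show "(w @ [x (i + int (length w))]) ! k = x (i + int k)"
    proof
      assume "k < length w" then show ?thesis using h by (simp add: nth_append)
    next
      assume "k = length w" then show ?thesis by simp
    qed
  qed
  then show ?thesis unfolding lang_iff using x by blast
qed

lemma lang_extL: "w \<in> lang X \<Longrightarrow> \<exists>a. a # w \<in> lang X"
proof -
  assume "w \<in> lang X"
  then obtain x i where x: "x \<in> X" and h: "\<forall>k<length w. w ! k = x (i + int k)"
    unfolding lang_iff by blast
  have "\<forall>k<length (x (i - 1) # w). (x (i - 1) # w) ! k = x ((i - 1) + int k)"
  proof (intro allI impI)
    fix k assume "k < length (x (i - 1) # w)"
    then show "(x (i - 1) # w) ! k = x ((i - 1) + int k)"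
    proof (cases k)
      case 0 then show ?thesis by simp
    next
      case (Suc j)
      then have "j < length w" using \<open>k < _\<close> by simp
      then have "w ! j = x (i + int j)" using h by blast
      moreover have "i - 1 + int k = i + int j" using Suc by simp
      ultimately show ?thesis using Suc by simp
    qed
  qed
  then show ?thesis unfolding lang_iff using x by blast
qed

lemma lang_extRn: "w \<in> lang X \<Longrightarrow> \<exists>v. length v = n \<and> w @ v \<in> lang X"
proof (induction n)
  case 0 then show ?case by auto
next
  case (Suc n)
  then obtain v where "length v = n" "w @ v \<in> lang X" by blast
  moreover from lang_extR[OF this(2)] obtain a where "w @ v @ [a] \<in> lang X" by auto
  ultimately show ?case by (intro exI[of _ "v @ [a]"]) auto
qed

lemma lang_extLn: "w \<in> lang X \<Longrightarrow> \<exists>u. length u = n \<and> u @ w \<in> lang X"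
proof (induction n)
  case 0 then show ?case by auto
next
  case (Suc n)
  then obtain u where "length u = n" "u @ w \<in> lang X" by blast
  moreover from lang_extL[OF this(2)] obtain a where "a # u @ w \<in> lang X" by auto
  ultimately show ?case by (intro exI[of _ "a # u"]) auto
qed


lemma mem_L: "u \<in> left_ext X k w \<longleftrightarrow> length u = k \<and> u @ w \<in> lang X"
  unfolding left_ext_def using lang_pre by blast

lemma mem_R: "v \<in> right_ext X l w \<longleftrightarrow> length v = l \<and> w @ v \<in> lang X"
  unfolding right_ext_def using lang_suf by blast

definition GV where "GV X k l w = Inl ` left_ext X k w \<union> Inr ` right_ext X l w"
definition GE where "GE X k l w p q \<longleftrightarrow> (\<exists>u v. u \<in> left_ext X k w \<and> v \<in> right_ext X l w \<and>
   u @ w @ v \<in> lang X \<and> ((p = Inl u \<and> q = Inr v) \<or> (p = Inr v \<and> q = Inl u)))"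
definition PP where "PP X k l w = {(u,v). length u = k \<and> length v = l \<and> u @ w @ v \<in> lang X}"
definition mm where "mm X k l w = int (card (PP X k l w)) + 1 - int (card (left_ext X k w)) - int (card (right_ext X l w))"

lemma mem_PP: "(u,v) \<in> PP X k l w \<longleftrightarrow> length u = k \<and> length v = l \<and> u @ w @ v \<in> lang X"
  unfolding PP_def by simp

lemma GE_iff: "GE X k l w p q \<longleftrightarrow> (\<exists>u v. (u,v) \<in> PP X k l w \<and> ((p = Inl u \<and> q = Inr v) \<or> (p = Inr v \<and> q = Inl u)))"
proof
  assume "GE X k l w p q"
  then show "\<exists>u v. (u,v) \<in> PP X k l w \<and> ((p = Inl u \<and> q = Inr v) \<or> (p = Inr v \<and> q = Inl u))"
    unfolding GE_def mem_PP mem_L mem_R by blast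
next
  assume "\<exists>u v. (u,v) \<in> PP X k l w \<and> ((p = Inl u \<and> q = Inr v) \<or> (p = Inr v \<and> q = Inl u))"
  then obtain u v where uv: "(u,v) \<in> PP X k l w" and pq: "(p = Inl u \<and> q = Inr v) \<or> (p = Inr v \<and> q = Inl u)"
    by blast
  have a: "length u = k" "length v = l" "u @ w @ v \<in> lang X" using uv by (simp_all add: mem_PP)
  have "u @ w \<in> lang X" using lang_pre[of "u @ w" v] a(3) by simp
  moreover have "w @ v \<in> lang X" using lang_suf[of u "w @ v"] a(3) by simp
  ultimately show "GE X k l w p q" unfolding GE_def mem_L mem_R using a pq by blast
qed

context
  fixes A :: "'a set" and X :: "(int \<Rightarrow> 'a) set"
  assumes ss: "shift_space A X"
begin

lemma lang_sub: "w \<in> lang X \<Longrightarrow> set w \<subseteq> A"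
proof -
  assume "w \<in> lang X"
  then obtain x i where x: "x \<in> X" and w: "w = map (\<lambda>k. x (i + int k)) [0..<length w]"
    unfolding lang_def by blast
  have "x \<in> PiE UNIV (\<lambda>_. A)" using x ss unfolding shift_space_def by blast
  then have "\<And>j. x j \<in> A" by (simp add: PiE_iff)
  then show "set w \<subseteq> A" by (subst w) auto
qed

lemma finA: "finite A" using ss unfolding shift_space_def by blast

lemma fin_L: "finite (left_ext X k w)"
  by (rule finite_subset[OF _ finite_lists_length_eq[OF finA, of k]])
     (use lang_pre lang_sub in \<open>fastforce simp: mem_L\<close>)

lemma fin_R: "finite (right_ext X l w)"
  by (rule finite_subset[OF _ finite_lists_length_eq[OF finA, of l]])
     (use lang_suf lang_sub in \<open>fastforce simp: mem_R\<close>)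

lemma PP_sub: "PP X k l w \<subseteq> left_ext X k w \<times> right_ext X l w"
proof
  fix uv assume "uv \<in> PP X k l w"
  then obtain u v where uv: "uv = (u,v)" and a: "length u = k" "length v = l" "u @ w @ v \<in> lang X"
    unfolding PP_def by blast
  have "u @ w \<in> lang X" using lang_pre[of "u @ w" v] a(3) by simp
  moreover have "w @ v \<in> lang X" using lang_suf[of u "w @ v"] a(3) by simp
  ultimately show "uv \<in> left_ext X k w \<times> right_ext X l w" using uv a by (simp add: mem_L mem_R)
qed

lemma fin_PP: "finite (PP X k l w)"
  using finite_subset[OF PP_sub] fin_L fin_R by blast

lemma fg: "fgraph (GV X k l w) (GE X k l w)"
proof
  show "finite (GV X k l w)" unfolding GV_def using fin_L fin_R by simp
next
  fix p q assume "GE X k l w p q"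
  then show "p \<in> GV X k l w \<and> q \<in> GV X k l w \<and> p \<noteq> q" unfolding GE_def GV_def by auto
next
  fix p q assume "GE X k l w p q" then show "GE X k l w q p" unfolding GE_def by blast
qed

lemma card_GV: "card (GV X k l w) = card (left_ext X k w) + card (right_ext X l w)"
proof -
  let ?A = "(Inl :: 'a list \<Rightarrow> 'a list + 'a list) ` left_ext X k w"
  let ?B = "(Inr :: 'a list \<Rightarrow> 'a list + 'a list) ` right_ext X l w"
  have disj: "?A \<inter> ?B = {}" by blast
  have "card (?A \<union> ?B) = card ?A + card ?B"
    by (rule card_Un_disjoint[OF _ _ disj]) (simp_all add: fin_L fin_R)
  moreover have "card ?A = card (left_ext X k w)" by (rule card_image) simp
  moreover have "card ?B = card (right_ext X l w)" by (rule card_image) simp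
  ultimately show ?thesis unfolding GV_def by simp
qed

lemma card_Ed: "card (fgraph.Ed (GE X k l w)) = card (PP X k l w)"
proof -
  have "fgraph.Ed (GE X k l w) = (\<lambda>(u,v). {Inl u, Inr v}) ` PP X k l w"
  proof (rule set_eqI)
    fix e
    show "e \<in> fgraph.Ed (GE X k l w) \<longleftrightarrow> e \<in> (\<lambda>(u,v). {Inl u, Inr v}) ` PP X k l w"
    proof
      assume "e \<in> fgraph.Ed (GE X k l w)"
      then obtain p q where e: "e = {p,q}" and "GE X k l w p q" unfolding fgraph.Ed_mem[OF fg] by blast
      then obtain u v where uv: "(u,v) \<in> PP X k l w" and pq: "(p = Inl u \<and> q = Inr v) \<or> (p = Inr v \<and> q = Inl u)"
        unfolding GE_iff by blast
      have "e = {Inl u, Inr v}" using e pq insert_commute by metis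
      then show "e \<in> (\<lambda>(u,v). {Inl u, Inr v}) ` PP X k l w" using uv
        by (intro image_eqI[of _ _ "(u,v)"]) auto
    next
      assume "e \<in> (\<lambda>(u,v). {Inl u, Inr v}) ` PP X k l w"
      then obtain u v where uv: "(u,v) \<in> PP X k l w" and e: "e = {Inl u, Inr v}" by auto
      have "GE X k l w (Inl u) (Inr v)" unfolding GE_iff using uv by blast
      then show "e \<in> fgraph.Ed (GE X k l w)" unfolding fgraph.Ed_mem[OF fg] using e by blast
    qed
  qed
  moreover have "inj_on (\<lambda>(u,v). {Inl u, Inr v}) (PP X k l w)"
  proof (rule inj_onI)
    fix a b assume "a \<in> PP X k l w" "b \<in> PP X k l w"
      and eq: "(\<lambda>(u,v). {Inl u, Inr v}) a = (\<lambda>(u,v). {Inl u, Inr v}) b"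
    obtain u v u' v' where a: "a = (u,v)" and b: "b = (u',v')" by fastforce
    from eq have "{Inl u, Inr v} = {Inl u', Inr v'}" unfolding a b by simp
    then have "u = u' \<and> v = v'" by (auto simp: doubleton_eq_iff)
    then show "a = b" using a b by simp
  qed
  ultimately show ?thesis using card_image by metis
qed

lemma tree_iff: "graph_connected (GV X k l w) (GE X k l w) \<Longrightarrow>
   is_tree (GV X k l w) (GE X k l w) \<longleftrightarrow> mm X k l w = 0"
proof -
  assume c: "graph_connected (GV X k l w) (GE X k l w)"
  have "is_tree (GV X k l w) (GE X k l w) \<longleftrightarrow> card (PP X k l w) + 1 = card (left_ext X k w) + card (right_ext X l w)"
    using GL[OF fg c] card_Ed card_GV by simp
  then show ?thesis unfolding mm_def by presburger
qed

lemma mm_nonneg: "graph_connected (GV X k l w) (GE X k l w) \<Longrightarrow> mm X k l w \<ge> 0"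
proof -
  assume c: "graph_connected (GV X k l w) (GE X k l w)"
  have "card (left_ext X k w) + card (right_ext X l w) \<le> card (PP X k l w) + 1"
    using fgraph.T3[OF fg c] card_Ed card_GV by simp
  then show ?thesis unfolding mm_def by presburger
qed

end




lemma take_drop_app [simp]: "take n xs @ drop n xs @ ys = xs @ ys"
  by (metis append_assoc append_take_drop_id)

context
  fixes A :: "'a set" and X :: "(int \<Rightarrow> 'a) set"
  assumes ss: "shift_space A X"
begin

lemma c1: "card (PP X k (Suc l) w) = (\<Sum>v\<in>right_ext X l w. card (PP X k 1 (w @ v)))"
proof -
  let ?S = "SIGMA v:right_ext X l w. PP X k 1 (w @ v)"
  let ?f = "\<lambda>(v,(u,b)). (u, v @ b)"
  let ?g = "\<lambda>(u,v'). (take l v', (u, drop l v'))"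
  have "bij_betw ?f ?S (PP X k (Suc l) w)"
  proof (rule bij_betw_byWitness[where f' = ?g])
    show "\<forall>a\<in>?S. ?g (?f a) = a" by (auto simp: mem_R)
    show "\<forall>a'\<in>PP X k (Suc l) w. ?f (?g a') = a'" by auto
    show "?f ` ?S \<subseteq> PP X k (Suc l) w" by (auto simp: mem_R mem_PP)
    show "?g ` PP X k (Suc l) w \<subseteq> ?S"
    proof
      fix z assume "z \<in> ?g ` PP X k (Suc l) w"
      then obtain u v' where uv: "(u,v') \<in> PP X k (Suc l) w" and z: "z = (take l v', (u, drop l v'))" by auto
      have a: "length u = k" "length v' = Suc l" "u @ w @ v' \<in> lang X" using uv by (simp_all add: mem_PP)
      have eq: "u @ w @ v' = u @ (w @ take l v') @ drop l v'" by simp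
      have "w @ take l v' \<in> lang X" using lang_infix[OF a(3) eq] .
      then show "z \<in> ?S" using a z by (simp add: mem_R mem_PP)
    qed
  qed
  then have "card (PP X k (Suc l) w) = card ?S" by (simp add: bij_betw_same_card)
  also have "\<dots> = (\<Sum>v\<in>right_ext X l w. card (PP X k 1 (w @ v)))"
    by (rule card_SigmaI) (auto simp: fin_R[OF ss] fin_PP[OF ss])
  finally show ?thesis .
qed

lemma c2: "card (PP X k l w) = (\<Sum>v\<in>right_ext X l w. card (left_ext X k (w @ v)))"
proof -
  let ?S = "SIGMA v:right_ext X l w. left_ext X k (w @ v)"
  let ?f = "\<lambda>(v,u). (u, v)"
  let ?g = "\<lambda>(u,v). (v, u)"
  have "bij_betw ?f ?S (PP X k l w)"
  proof (rule bij_betw_byWitness[where f' = ?g])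
    show "\<forall>a\<in>?S. ?g (?f a) = a" by auto
    show "\<forall>a'\<in>PP X k l w. ?f (?g a') = a'" by auto
    show "?f ` ?S \<subseteq> PP X k l w" by (auto simp: mem_R mem_L mem_PP)
    show "?g ` PP X k l w \<subseteq> ?S"
    proof
      fix z assume "z \<in> ?g ` PP X k l w"
      then obtain u v where uv: "(u,v) \<in> PP X k l w" and z: "z = (v,u)" by auto
      have a: "length u = k" "length v = l" "u @ w @ v \<in> lang X" using uv by (simp_all add: mem_PP)
      have eq: "u @ w @ v = u @ (w @ v) @ []" by simp
      have "w @ v \<in> lang X" using lang_infix[OF a(3) eq] .
      then show "z \<in> ?S" using a z by (simp add: mem_R mem_L)
    qed
  qed
  then have "card (PP X k l w) = card ?S" by (simp add: bij_betw_same_card)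
  also have "\<dots> = (\<Sum>v\<in>right_ext X l w. card (left_ext X k (w @ v)))"
    by (rule card_SigmaI) (auto simp: fin_R[OF ss] fin_L[OF ss])
  finally show ?thesis .
qed

lemma c3: "card (right_ext X (Suc l) w) = (\<Sum>v\<in>right_ext X l w. card (right_ext X 1 (w @ v)))"
proof -
  let ?S = "SIGMA v:right_ext X l w. right_ext X 1 (w @ v)"
  let ?f = "\<lambda>(v,b). v @ b"
  let ?g = "\<lambda>v'. (take l v', drop l v')"
  have "bij_betw ?f ?S (right_ext X (Suc l) w)"
  proof (rule bij_betw_byWitness[where f' = ?g])
    show "\<forall>a\<in>?S. ?g (?f a) = a" by (auto simp: mem_R)
    show "\<forall>a'\<in>right_ext X (Suc l) w. ?f (?g a') = a'" by auto
    show "?f ` ?S \<subseteq> right_ext X (Suc l) w" by (auto simp: mem_R)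
    show "?g ` right_ext X (Suc l) w \<subseteq> ?S"
    proof
      fix z assume "z \<in> ?g ` right_ext X (Suc l) w"
      then obtain v' where uv: "v' \<in> right_ext X (Suc l) w" and z: "z = ?g v'" by blast
      have a: "length v' = Suc l" "w @ v' \<in> lang X" using uv by (simp_all add: mem_R)
      have eq: "w @ v' = [] @ (w @ take l v') @ drop l v'" by simp
      have "w @ take l v' \<in> lang X" using lang_infix[OF a(2) eq] .
      then show "z \<in> ?S" using a z by (simp add: mem_R)
    qed
  qed
  then have "card (right_ext X (Suc l) w) = card ?S" by (simp add: bij_betw_same_card)
  also have "\<dots> = (\<Sum>v\<in>right_ext X l w. card (right_ext X 1 (w @ v)))"
    by (rule card_SigmaI) (auto simp: fin_R[OF ss])
  finally show ?thesis .
qed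

lemma d1: "card (PP X (Suc k) l w) = (\<Sum>u\<in>left_ext X k w. card (PP X 1 l (u @ w)))"
proof -
  let ?S = "SIGMA u:left_ext X k w. PP X 1 l (u @ w)"
  let ?f = "\<lambda>(u,(a,v)). (a @ u, v)"
  let ?g = "\<lambda>(u',v). (drop 1 u', (take 1 u', v))"
  have "bij_betw ?f ?S (PP X (Suc k) l w)"
  proof (rule bij_betw_byWitness[where f' = ?g])
    show "\<forall>a\<in>?S. ?g (?f a) = a" by (auto simp: mem_L mem_PP)
    show "\<forall>a'\<in>PP X (Suc k) l w. ?f (?g a') = a'" by auto
    show "?f ` ?S \<subseteq> PP X (Suc k) l w" by (auto simp: mem_L mem_PP)
    show "?g ` PP X (Suc k) l w \<subseteq> ?S"
    proof
      fix z assume "z \<in> ?g ` PP X (Suc k) l w"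
      then obtain u' v where uv: "(u',v) \<in> PP X (Suc k) l w" and z: "z = (drop 1 u', (take 1 u', v))" by auto
      have a: "length u' = Suc k" "length v = l" "u' @ w @ v \<in> lang X" using uv by (simp_all add: mem_PP)
      have eq: "u' @ w @ v = take 1 u' @ (drop 1 u' @ w) @ v" by simp
      have "drop 1 u' @ w \<in> lang X" using lang_infix[OF a(3) eq] .
      then show "z \<in> ?S" using a z by (simp add: mem_L mem_PP)
    qed
  qed
  then have "card (PP X (Suc k) l w) = card ?S" by (simp add: bij_betw_same_card)
  also have "\<dots> = (\<Sum>u\<in>left_ext X k w. card (PP X 1 l (u @ w)))"
    by (rule card_SigmaI) (auto simp: fin_L[OF ss] fin_PP[OF ss])
  finally show ?thesis .
qed

lemma d2: "card (PP X k l w) = (\<Sum>u\<in>left_ext X k w. card (right_ext X l (u @ w)))"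
proof -
  have "PP X k l w = (SIGMA u:left_ext X k w. right_ext X l (u @ w))"
  proof (rule set_eqI)
    fix z show "z \<in> PP X k l w \<longleftrightarrow> z \<in> (SIGMA u:left_ext X k w. right_ext X l (u @ w))"
    proof (cases z)
      case (Pair u v)
      have "u @ w @ v \<in> lang X \<Longrightarrow> u @ w \<in> lang X"
      proof -
        assume h: "u @ w @ v \<in> lang X"
        have eq: "u @ w @ v = [] @ (u @ w) @ v" by simp
        show "u @ w \<in> lang X" using lang_infix[OF h eq] .
      qed
      then show ?thesis using Pair by (auto simp: mem_PP mem_L mem_R)
    qed
  qed
  then show ?thesis by (simp add: fin_L[OF ss] fin_R[OF ss])
qed

lemma d3: "card (left_ext X (Suc k) w) = (\<Sum>u\<in>left_ext X k w. card (left_ext X 1 (u @ w)))"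
proof -
  let ?S = "SIGMA u:left_ext X k w. left_ext X 1 (u @ w)"
  let ?f = "\<lambda>(u,a). a @ u"
  let ?g = "\<lambda>u'. (drop 1 u', take 1 u')"
  have "bij_betw ?f ?S (left_ext X (Suc k) w)"
  proof (rule bij_betw_byWitness[where f' = ?g])
    show "\<forall>a\<in>?S. ?g (?f a) = a" by (auto simp: mem_L)
    show "\<forall>a'\<in>left_ext X (Suc k) w. ?f (?g a') = a'" by auto
    show "?f ` ?S \<subseteq> left_ext X (Suc k) w" by (auto simp: mem_L)
    show "?g ` left_ext X (Suc k) w \<subseteq> ?S"
    proof
      fix z assume "z \<in> ?g ` left_ext X (Suc k) w"
      then obtain u' where uv: "u' \<in> left_ext X (Suc k) w" and z: "z = ?g u'" by blast
      have a: "length u' = Suc k" "u' @ w \<in> lang X" using uv by (simp_all add: mem_L)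
      have eq: "u' @ w = take 1 u' @ (drop 1 u' @ w) @ []" by simp
      have "drop 1 u' @ w \<in> lang X" using lang_infix[OF a(2) eq] .
      then show "z \<in> ?S" using a z by (simp add: mem_L)
    qed
  qed
  then have "card (left_ext X (Suc k) w) = card ?S" by (simp add: bij_betw_same_card)
  also have "\<dots> = (\<Sum>u\<in>left_ext X k w. card (left_ext X 1 (u @ w)))"
    by (rule card_SigmaI) (auto simp: fin_L[OF ss])
  finally show ?thesis .
qed

lemma mmR: "mm X k (Suc l) w = mm X k l w + (\<Sum>v\<in>right_ext X l w. mm X k 1 (w @ v))"
proof -
  let ?R = "right_ext X l w"
  have s: "(\<Sum>v\<in>?R. mm X k 1 (w @ v)) = int (\<Sum>v\<in>?R. card (PP X k 1 (w @ v))) + int (card ?R)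
      - int (\<Sum>v\<in>?R. card (left_ext X k (w @ v))) - int (\<Sum>v\<in>?R. card (right_ext X 1 (w @ v)))"
    unfolding mm_def by (simp add: sum_subtractf sum.distrib)
  have e1: "int (card (PP X k (Suc l) w)) = int (\<Sum>v\<in>?R. card (PP X k 1 (w @ v)))" by (simp only: c1[of k l w])
  have e2: "int (card (PP X k l w)) = int (\<Sum>v\<in>?R. card (left_ext X k (w @ v)))" by (simp only: c2[of k l w])
  have e3: "int (card (right_ext X (Suc l) w)) = int (\<Sum>v\<in>?R. card (right_ext X 1 (w @ v)))" by (simp only: c3[of l w])
  show ?thesis unfolding mm_def[of X k "Suc l"] mm_def[of X k l] using s e1 e2 e3 by linarith
qed

lemma mmL: "mm X (Suc k) l w = mm X k l w + (\<Sum>u\<in>left_ext X k w. mm X 1 l (u @ w))"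
proof -
  let ?L = "left_ext X k w"
  have s: "(\<Sum>u\<in>?L. mm X 1 l (u @ w)) = int (\<Sum>u\<in>?L. card (PP X 1 l (u @ w))) + int (card ?L)
      - int (\<Sum>u\<in>?L. card (left_ext X 1 (u @ w))) - int (\<Sum>u\<in>?L. card (right_ext X l (u @ w)))"
    unfolding mm_def by (simp add: sum_subtractf sum.distrib)
  have e1: "int (card (PP X (Suc k) l w)) = int (\<Sum>u\<in>?L. card (PP X 1 l (u @ w)))" by (simp only: d1[of k l w])
  have e2: "int (card (PP X k l w)) = int (\<Sum>u\<in>?L. card (right_ext X l (u @ w)))" by (simp only: d2[of k l w])
  have e3: "int (card (left_ext X (Suc k) w)) = int (\<Sum>u\<in>?L. card (left_ext X 1 (u @ w)))" by (simp only: d3[of k w])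
  show ?thesis unfolding mm_def[of X "Suc k" l] mm_def[of X k l] using s e1 e2 e3 by linarith
qed

end




lemma hom_rt:
  assumes "(x,y) \<in> {(p,q). p\<in>V \<and> q\<in>V \<and> E p q}\<^sup>*"
    and "\<And>p q. p\<in>V \<Longrightarrow> q\<in>V \<Longrightarrow> E p q \<Longrightarrow> f p \<in> V' \<and> f q \<in> V' \<and> E' (f p) (f q)"
  shows "(f x, f y) \<in> {(p,q). p\<in>V' \<and> q\<in>V' \<and> E' p q}\<^sup>*"
  using assms(1)
proof (induction rule: rtrancl_induct)
  case base then show ?case by simp
next
  case (step y z)
  then have "(f y, f z) \<in> {(p,q). p\<in>V' \<and> q\<in>V' \<and> E' p q}" using assms(2) by auto
  with step.IH show ?case by (rule rtrancl_into_rtrancl)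
qed

lemma hom_conn:
  assumes c: "graph_connected V E" and im: "f ` V = V'"
    and h: "\<And>p q. p\<in>V \<Longrightarrow> q\<in>V \<Longrightarrow> E p q \<Longrightarrow> E' (f p) (f q)"
  shows "graph_connected V' E'"
  unfolding graph_connected_def
proof (intro conjI ballI)
  show "V' \<noteq> {}" using c im unfolding graph_connected_def by auto
next
  fix x' y' assume "x' \<in> V'" "y' \<in> V'"
  then obtain x y where x: "x \<in> V" "x' = f x" and y: "y \<in> V" "y' = f y" using im by auto
  have "(x,y) \<in> {(p,q). p\<in>V \<and> q\<in>V \<and> E p q}\<^sup>*" using c x y unfolding graph_connected_def by blast
  from hom_rt[OF this, of f V' E'] im h
  show "(x', y') \<in> {(p,q). p\<in>V' \<and> q\<in>V' \<and> E' p q}\<^sup>*" using x y by blast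
qed

lemma GE_in: "GE X k l w p q \<Longrightarrow> p \<in> GV X k l w \<and> q \<in> GV X k l w"
  unfolding GE_def GV_def by auto

lemma GE_sym: "GE X k l w p q \<Longrightarrow> GE X k l w q p"
  unfolding GE_def by blast

lemma PP_L: "(u,v) \<in> PP X k l w \<Longrightarrow> u \<in> left_ext X k w"
proof -
  assume h: "(u,v) \<in> PP X k l w"
  then have a: "length u = k" "u @ w @ v \<in> lang X" by (simp_all add: mem_PP)
  have eq: "u @ w @ v = [] @ (u @ w) @ v" by simp
  show ?thesis using lang_infix[OF a(2) eq] a(1) by (simp add: mem_L)
qed

lemma PP_R: "(u,v) \<in> PP X k l w \<Longrightarrow> v \<in> right_ext X l w"
proof -
  assume h: "(u,v) \<in> PP X k l w"
  then have a: "length v = l" "u @ w @ v \<in> lang X" by (simp_all add: mem_PP)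
  have eq: "u @ w @ v = u @ (w @ v) @ []" by simp
  show ?thesis using lang_infix[OF a(2) eq] a(1) by (simp add: mem_R)
qed

lemma GV_lang: "GV X k l w \<noteq> {} \<Longrightarrow> w \<in> lang X"
proof -
  assume "GV X k l w \<noteq> {}"
  then obtain z where "z \<in> GV X k l w" by blast
  then consider u where "u @ w \<in> lang X" | v where "w @ v \<in> lang X"
    unfolding GV_def by (auto simp: mem_L mem_R)
  then show ?thesis
  proof cases
    case 1 then show ?thesis by (rule lang_suf)
  next
    case 2 then show ?thesis by (rule lang_pre)
  qed
qed

lemma proj:
  assumes c: "graph_connected (GV X k l w) (GE X k l w)" and kk: "k' \<le> k" and ll: "l' \<le> l"
  shows "graph_connected (GV X k' l' w) (GE X k' l' w)"
proof (rule hom_conn[OF c, where f = "map_sum (drop (k - k')) (take l')"])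
  let ?f = "map_sum (drop (k - k')) (take l') :: 'a list + 'a list \<Rightarrow> _"
  show "?f ` GV X k l w = GV X k' l' w"
  proof (rule set_eqI, rule iffI)
    fix z assume "z \<in> ?f ` GV X k l w"
    then consider u where "u \<in> left_ext X k w" "z = Inl (drop (k - k') u)"
      | v where "v \<in> right_ext X l w" "z = Inr (take l' v)"
      unfolding GV_def by auto
    then show "z \<in> GV X k' l' w"
    proof cases
      case 1
      then have a: "length u = k" "u @ w \<in> lang X" by (simp_all add: mem_L)
      have eq: "u @ w = take (k - k') u @ (drop (k - k') u @ w) @ []" by simp
      have "drop (k - k') u \<in> left_ext X k' w"
        using lang_infix[OF a(2) eq] a(1) kk by (simp add: mem_L)
      then show ?thesis using 1 unfolding GV_def by simp
    next
      case 2
      then have a: "length v = l" "w @ v \<in> lang X" by (simp_all add: mem_R)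
      have eq: "w @ v = [] @ (w @ take l' v) @ drop l' v" by simp
      have "take l' v \<in> right_ext X l' w"
        using lang_infix[OF a(2) eq] a(1) ll by (simp add: mem_R)
      then show ?thesis using 2 unfolding GV_def by simp
    qed
  next
    fix z assume "z \<in> GV X k' l' w"
    then consider u where "u \<in> left_ext X k' w" "z = Inl u"
      | v where "v \<in> right_ext X l' w" "z = Inr v"
      unfolding GV_def by auto
    then show "z \<in> ?f ` GV X k l w"
    proof cases
      case 1
      then have a: "length u = k'" "u @ w \<in> lang X" by (simp_all add: mem_L)
      obtain u0 where u0: "length u0 = k - k'" "u0 @ u @ w \<in> lang X"
        using lang_extLn[OF a(2)] by auto
      have "u0 @ u \<in> left_ext X k w" using u0 a kk by (simp add: mem_L)
      moreover have "?f (Inl (u0 @ u)) = z" using 1 u0 by simp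
      ultimately show ?thesis unfolding GV_def by (metis UnI1 image_eqI)
    next
      case 2
      then have a: "length v = l'" "w @ v \<in> lang X" by (simp_all add: mem_R)
      obtain v1 where v1: "length v1 = l - l'" "(w @ v) @ v1 \<in> lang X"
        using lang_extRn[OF a(2)] by blast
      have "v @ v1 \<in> right_ext X l w" using v1 a ll by (simp add: mem_R)
      moreover have "?f (Inr (v @ v1)) = z" using 2 a by simp
      ultimately show ?thesis unfolding GV_def by (metis UnI2 image_eqI)
    qed
  qed
next
  fix p q assume "GE X k l w p q"
  then obtain u v where uv: "(u,v) \<in> PP X k l w" and pq: "(p = Inl u \<and> q = Inr v) \<or> (p = Inr v \<and> q = Inl u)"
    unfolding GE_iff by blast
  have a: "length u = k" "length v = l" "u @ w @ v \<in> lang X" using uv by (simp_all add: mem_PP)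
  have eq: "u @ w @ v = take (k - k') u @ (drop (k - k') u @ w @ take l' v) @ drop l' v" by simp
  have "(drop (k - k') u, take l' v) \<in> PP X k' l' w"
    using lang_infix[OF a(3) eq] a kk ll by (simp add: mem_PP)
  then show "GE X k' l' w (map_sum (drop (k - k')) (take l') p) (map_sum (drop (k - k')) (take l') q)"
    unfolding GE_iff using pq by auto
qed

lemma sym_GE_rel:
  "(p,q) \<in> {(p,q). p \<in> GV X k l w \<and> q \<in> GV X k l w \<and> GE X k l w p q} \<Longrightarrow>
   (q,p) \<in> {(p,q). p \<in> GV X k l w \<and> q \<in> GV X k l w \<and> GE X k l w p q}"
  using GE_sym by blast

lemma ascR:
  assumes c: "graph_connected (GV X k l w) (GE X k l w)"
    and f: "\<And>v. v \<in> right_ext X l w \<Longrightarrow> graph_connected (GV X k 1 (w @ v)) (GE X k 1 (w @ v))"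
  shows "graph_connected (GV X k (Suc l) w) (GE X k (Suc l) w)"
proof -
  define S where "S = {(p,q). p \<in> GV X k l w \<and> q \<in> GV X k l w \<and> GE X k l w p q}"
  define S' where "S' = {(p,q). p \<in> GV X k (Suc l) w \<and> q \<in> GV X k (Suc l) w \<and> GE X k (Suc l) w p q}"
  have symS': "\<And>p q. (p,q) \<in> S' \<Longrightarrow> (q,p) \<in> S'" unfolding S'_def by (rule sym_GE_rel)
  have fib: "(Inl u1, Inl u2) \<in> S'\<^sup>*"
    if v: "v \<in> right_ext X l w" and u1: "u1 \<in> left_ext X k (w @ v)" and u2: "u2 \<in> left_ext X k (w @ v)" for v u1 u2
  proof -
    have lv: "length v = l" using v by (simp add: mem_R)
    have r1: "(Inl u1, Inl u2) \<in> {(p,q). p \<in> GV X k 1 (w @ v) \<and> q \<in> GV X k 1 (w @ v) \<and> GE X k 1 (w @ v) p q}\<^sup>*"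
      using f[OF v] u1 u2 unfolding graph_connected_def GV_def by blast
    have h1: "map_sum id ((@) v) p \<in> GV X k (Suc l) w \<and> map_sum id ((@) v) q \<in> GV X k (Suc l) w \<and>
        GE X k (Suc l) w (map_sum id ((@) v) p) (map_sum id ((@) v) q)"
      if "GE X k 1 (w @ v) p q" for p q
    proof -
      from that obtain u b where ub: "(u,b) \<in> PP X k 1 (w @ v)"
        and pq: "(p = Inl u \<and> q = Inr b) \<or> (p = Inr b \<and> q = Inl u)"
        unfolding GE_iff by blast
      have "(u, v @ b) \<in> PP X k (Suc l) w" using ub lv by (simp add: mem_PP)
      then have "GE X k (Suc l) w (map_sum id ((@) v) p) (map_sum id ((@) v) q)"
        unfolding GE_iff using pq by auto
      then show ?thesis using GE_in by blast
    qed
    have "(map_sum id ((@) v) (Inl u1), map_sum id ((@) v) (Inl u2)) \<in> S'\<^sup>*"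
      unfolding S'_def by (rule hom_rt[OF r1]) (rule h1)
    then show ?thesis by simp
  qed
  have A: "case z of Inl u \<Rightarrow> (Inl u1, Inl u) \<in> S'\<^sup>*
           | Inr v \<Rightarrow> (\<forall>u\<in>left_ext X k (w @ v). (Inl u1, Inl u) \<in> S'\<^sup>*)"
    if "(Inl u1, z) \<in> S\<^sup>*" for u1 z
    using that
  proof (induction rule: rtrancl_induct)
    case base then show ?case by simp
  next
    case (step y z)
    from step.hyps(2) have "GE X k l w y z" unfolding S_def by blast
    then obtain u v where uv: "(u,v) \<in> PP X k l w" and yz: "(y = Inl u \<and> z = Inr v) \<or> (y = Inr v \<and> z = Inl u)"
      unfolding GE_iff by blast
    have uL: "u \<in> left_ext X k (w @ v)" using uv by (simp add: mem_PP mem_L)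
    have vR: "v \<in> right_ext X l w" using PP_R[OF uv] .
    from yz show ?case
    proof
      assume h: "y = Inl u \<and> z = Inr v"
      then have "(Inl u1, Inl u) \<in> S'\<^sup>*" using step.IH by simp
      then show ?case using h fib[OF vR uL] by (auto intro: rtrancl_trans)
    next
      assume h: "y = Inr v \<and> z = Inl u"
      then show ?case using step.IH uL by simp
    qed
  qed
  have LL: "(Inl u1, Inl u2) \<in> S'\<^sup>*" if "u1 \<in> left_ext X k w" "u2 \<in> left_ext X k w" for u1 u2
  proof -
    have "(Inl u1, Inl u2) \<in> S\<^sup>*" using c that unfolding graph_connected_def S_def GV_def by blast
    from A[OF this] show ?thesis by simp
  qed
  have B: "\<exists>u\<in>left_ext X k w. (z, Inl u) \<in> S'\<^sup>*" if "z \<in> GV X k (Suc l) w" for z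
  proof -
    from that consider u where "u \<in> left_ext X k w" "z = Inl u" | v where "v \<in> right_ext X (Suc l) w" "z = Inr v"
      unfolding GV_def by auto
    then show ?thesis
    proof cases
      case 1 then show ?thesis by auto
    next
      case 2
      then have a: "w @ v \<in> lang X" "length v = Suc l" by (simp_all add: mem_R)
      obtain u where u: "length u = k" "u @ w @ v \<in> lang X" using lang_extLn[OF a(1)] by auto
      have uv: "(u,v) \<in> PP X k (Suc l) w" using u a by (simp add: mem_PP)
      then have "GE X k (Suc l) w z (Inl u)" unfolding GE_iff using 2 by blast
      then have "(z, Inl u) \<in> S'" unfolding S'_def using GE_in by blast
      then show ?thesis using PP_L[OF uv] by blast
    qed
  qed
  have ne: "GV X k (Suc l) w \<noteq> {}"
  proof -
    have "w \<in> lang X" using c GV_lang unfolding graph_connected_def by blast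
    then obtain v where "length v = Suc l" "w @ v \<in> lang X" using lang_extRn by blast
    then have "Inr v \<in> GV X k (Suc l) w" unfolding GV_def by (simp add: mem_R)
    then show ?thesis by blast
  qed
  show ?thesis unfolding graph_connected_def
  proof (intro conjI ballI)
    show "GV X k (Suc l) w \<noteq> {}" by (rule ne)
  next
    fix x y assume x: "x \<in> GV X k (Suc l) w" and y: "y \<in> GV X k (Suc l) w"
    obtain ux where ux: "ux \<in> left_ext X k w" "(x, Inl ux) \<in> S'\<^sup>*" using B[OF x] by blast
    obtain uy where uy: "uy \<in> left_ext X k w" "(y, Inl uy) \<in> S'\<^sup>*" using B[OF y] by blast
    have "(Inl uy, y) \<in> S'\<^sup>*" using sym_rt[OF symS' uy(2)] .
    then have "(x, y) \<in> S'\<^sup>*" using ux(2) LL[OF ux(1) uy(1)] by (meson rtrancl_trans)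
    then show "(x,y) \<in> {(p, q). p \<in> GV X k (Suc l) w \<and> q \<in> GV X k (Suc l) w \<and> GE X k (Suc l) w p q}\<^sup>*"
      unfolding S'_def .
  qed
qed

lemma ascL:
  assumes c: "graph_connected (GV X k l w) (GE X k l w)"
    and f: "\<And>u. u \<in> left_ext X k w \<Longrightarrow> graph_connected (GV X 1 l (u @ w)) (GE X 1 l (u @ w))"
  shows "graph_connected (GV X (Suc k) l w) (GE X (Suc k) l w)"
proof -
  define S where "S = {(p,q). p \<in> GV X k l w \<and> q \<in> GV X k l w \<and> GE X k l w p q}"
  define S' where "S' = {(p,q). p \<in> GV X (Suc k) l w \<and> q \<in> GV X (Suc k) l w \<and> GE X (Suc k) l w p q}"
  have symS': "\<And>p q. (p,q) \<in> S' \<Longrightarrow> (q,p) \<in> S'" unfolding S'_def by (rule sym_GE_rel)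
  have fib: "(Inr v1, Inr v2) \<in> S'\<^sup>*"
    if u: "u \<in> left_ext X k w" and v1: "v1 \<in> right_ext X l (u @ w)" and v2: "v2 \<in> right_ext X l (u @ w)" for u v1 v2
  proof -
    have lu: "length u = k" using u by (simp add: mem_L)
    have r1: "(Inr v1, Inr v2) \<in> {(p,q). p \<in> GV X 1 l (u @ w) \<and> q \<in> GV X 1 l (u @ w) \<and> GE X 1 l (u @ w) p q}\<^sup>*"
      using f[OF u] v1 v2 unfolding graph_connected_def GV_def by blast
    have h1: "map_sum (\<lambda>a. a @ u) id p \<in> GV X (Suc k) l w \<and> map_sum (\<lambda>a. a @ u) id q \<in> GV X (Suc k) l w \<and>
        GE X (Suc k) l w (map_sum (\<lambda>a. a @ u) id p) (map_sum (\<lambda>a. a @ u) id q)"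
      if "GE X 1 l (u @ w) p q" for p q
    proof -
      from that obtain a v where av: "(a,v) \<in> PP X 1 l (u @ w)"
        and pq: "(p = Inl a \<and> q = Inr v) \<or> (p = Inr v \<and> q = Inl a)"
        unfolding GE_iff by blast
      have "(a @ u, v) \<in> PP X (Suc k) l w" using av lu by (simp add: mem_PP)
      then have "GE X (Suc k) l w (map_sum (\<lambda>a. a @ u) id p) (map_sum (\<lambda>a. a @ u) id q)"
        unfolding GE_iff using pq by auto
      then show ?thesis using GE_in by blast
    qed
    have "(map_sum (\<lambda>a. a @ u) id (Inr v1), map_sum (\<lambda>a. a @ u) id (Inr v2)) \<in> S'\<^sup>*"
      unfolding S'_def by (rule hom_rt[OF r1]) (rule h1)
    then show ?thesis by simp
  qed
  have A: "case z of Inr v \<Rightarrow> (Inr v1, Inr v) \<in> S'\<^sup>*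
           | Inl u \<Rightarrow> (\<forall>v\<in>right_ext X l (u @ w). (Inr v1, Inr v) \<in> S'\<^sup>*)"
    if "(Inr v1, z) \<in> S\<^sup>*" for v1 z
    using that
  proof (induction rule: rtrancl_induct)
    case base then show ?case by simp
  next
    case (step y z)
    from step.hyps(2) have "GE X k l w y z" unfolding S_def by blast
    then obtain u v where uv: "(u,v) \<in> PP X k l w" and yz: "(y = Inl u \<and> z = Inr v) \<or> (y = Inr v \<and> z = Inl u)"
      unfolding GE_iff by blast
    have vR: "v \<in> right_ext X l (u @ w)" using uv by (simp add: mem_PP mem_R)
    have uL: "u \<in> left_ext X k w" using PP_L[OF uv] .
    from yz show ?case
    proof
      assume h: "y = Inl u \<and> z = Inr v"
      then show ?case using step.IH vR by simp
    next
      assume h: "y = Inr v \<and> z = Inl u"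
      then have "(Inr v1, Inr v) \<in> S'\<^sup>*" using step.IH by simp
      then show ?case using h fib[OF uL vR] by (auto intro: rtrancl_trans)
    qed
  qed
  have RR: "(Inr v1, Inr v2) \<in> S'\<^sup>*" if "v1 \<in> right_ext X l w" "v2 \<in> right_ext X l w" for v1 v2
  proof -
    have "(Inr v1, Inr v2) \<in> S\<^sup>*" using c that unfolding graph_connected_def S_def GV_def by blast
    from A[OF this] show ?thesis by simp
  qed
  have B: "\<exists>v\<in>right_ext X l w. (z, Inr v) \<in> S'\<^sup>*" if "z \<in> GV X (Suc k) l w" for z
  proof -
    from that consider u where "u \<in> left_ext X (Suc k) w" "z = Inl u" | v where "v \<in> right_ext X l w" "z = Inr v"
      unfolding GV_def by auto
    then show ?thesis
    proof cases
      case 2 then show ?thesis by auto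
    next
      case 1
      then have a: "u @ w \<in> lang X" "length u = Suc k" by (simp_all add: mem_L)
      obtain v where v: "length v = l" "(u @ w) @ v \<in> lang X" using lang_extRn[OF a(1)] by blast
      have uv: "(u,v) \<in> PP X (Suc k) l w" using v a by (simp add: mem_PP)
      then have "GE X (Suc k) l w z (Inr v)" unfolding GE_iff using 1 by blast
      then have "(z, Inr v) \<in> S'" unfolding S'_def using GE_in by blast
      then show ?thesis using PP_R[OF uv] by blast
    qed
  qed
  have ne: "GV X (Suc k) l w \<noteq> {}"
  proof -
    have "w \<in> lang X" using c GV_lang unfolding graph_connected_def by blast
    then obtain u where "length u = Suc k" "u @ w \<in> lang X" using lang_extLn by blast
    then have "Inl u \<in> GV X (Suc k) l w" unfolding GV_def by (simp add: mem_L)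
    then show ?thesis by blast
  qed
  show ?thesis unfolding graph_connected_def
  proof (intro conjI ballI)
    show "GV X (Suc k) l w \<noteq> {}" by (rule ne)
  next
    fix x y assume x: "x \<in> GV X (Suc k) l w" and y: "y \<in> GV X (Suc k) l w"
    obtain vx where vx: "vx \<in> right_ext X l w" "(x, Inr vx) \<in> S'\<^sup>*" using B[OF x] by blast
    obtain vy where vy: "vy \<in> right_ext X l w" "(y, Inr vy) \<in> S'\<^sup>*" using B[OF y] by blast
    have "(Inr vy, y) \<in> S'\<^sup>*" using sym_rt[OF symS' vy(2)] .
    then have "(x, y) \<in> S'\<^sup>*" using vx(2) RR[OF vx(1) vy(1)] by (meson rtrancl_trans)
    then show "(x,y) \<in> {(p, q). p \<in> GV X (Suc k) l w \<and> q \<in> GV X (Suc k) l w \<and> GE X (Suc k) l w p q}\<^sup>*"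
      unfolding S'_def .
  qed
qed

lemma ext_tree_eq: "ext_graph_is_tree X n w = is_tree (GV X n n w) (GE X n n w)"
proof -
  have "ext_edge X n w = GE X n n w" by (intro ext) (simp add: ext_edge_def GE_def)
  then show ?thesis unfolding ext_graph_is_tree_def ext_vertices_def GV_def by simp
qed

lemma lang_ge_R: "w \<in> lang_ge X m \<Longrightarrow> v \<in> right_ext X l w \<Longrightarrow> w @ v \<in> lang_ge X m"
  unfolding lang_ge_def by (auto simp: mem_R)

lemma lang_ge_L: "w \<in> lang_ge X m \<Longrightarrow> u \<in> left_ext X k w \<Longrightarrow> u @ w \<in> lang_ge X m"
  unfolding lang_ge_def by (auto simp: mem_L)

context
  fixes A :: "'a set" and X :: "(int \<Rightarrow> 'a) set"
  assumes ss: "shift_space A X"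
begin

lemma fwd1:
  assumes H: "\<forall>w\<in>lang_ge X m. is_tree (GV X 1 1 w) (GE X 1 1 w)"
  shows "\<forall>w\<in>lang_ge X m. is_tree (GV X 1 (Suc l) w) (GE X 1 (Suc l) w)"
proof (induction l)
  case 0 then show ?case using H by simp
next
  case (Suc l)
  show ?case
  proof
    fix w assume w: "w \<in> lang_ge X m"
    have t: "is_tree (GV X 1 (Suc l) w) (GE X 1 (Suc l) w)" using Suc w by blast
    have c: "graph_connected (GV X 1 (Suc l) w) (GE X 1 (Suc l) w)" using t unfolding is_tree_def by simp
    have ft: "is_tree (GV X 1 1 (w @ v)) (GE X 1 1 (w @ v))" if "v \<in> right_ext X (Suc l) w" for v
      using H lang_ge_R[OF w that] by blast
    have fc: "graph_connected (GV X 1 1 (w @ v)) (GE X 1 1 (w @ v))" if "v \<in> right_ext X (Suc l) w" for v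
      using ft[OF that] unfolding is_tree_def by simp
    have c': "graph_connected (GV X 1 (Suc (Suc l)) w) (GE X 1 (Suc (Suc l)) w)" by (rule ascR[OF c fc])
    have m0: "mm X 1 (Suc l) w = 0" using tree_iff[OF ss c] t by simp
    have m1: "mm X 1 1 (w @ v) = 0" if "v \<in> right_ext X (Suc l) w" for v
      using tree_iff[OF ss fc[OF that]] ft[OF that] by simp
    have s0: "(\<Sum>v\<in>right_ext X (Suc l) w. mm X 1 1 (w @ v)) = 0" by (rule sum.neutral) (use m1 in blast)
    have "mm X 1 (Suc (Suc l)) w = 0" using mmR[OF ss, of 1 "Suc l" w] m0 s0 by simp
    then show "is_tree (GV X 1 (Suc (Suc l)) w) (GE X 1 (Suc (Suc l)) w)" using tree_iff[OF ss c'] by simp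
  qed
qed

lemma fwd:
  assumes H: "\<forall>w\<in>lang_ge X m. is_tree (GV X 1 1 w) (GE X 1 1 w)"
  shows "\<forall>l. \<forall>w\<in>lang_ge X m. is_tree (GV X (Suc k) (Suc l) w) (GE X (Suc k) (Suc l) w)"
proof (induction k)
  case 0 then show ?case using fwd1[OF H] by simp
next
  case (Suc k)
  show ?case
  proof (intro allI ballI)
    fix l w assume w: "w \<in> lang_ge X m"
    have t: "is_tree (GV X (Suc k) (Suc l) w) (GE X (Suc k) (Suc l) w)" using Suc w by blast
    have c: "graph_connected (GV X (Suc k) (Suc l) w) (GE X (Suc k) (Suc l) w)" using t unfolding is_tree_def by simp
    have ft: "is_tree (GV X 1 (Suc l) (u @ w)) (GE X 1 (Suc l) (u @ w))" if "u \<in> left_ext X (Suc k) w" for u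
      using fwd1[OF H] lang_ge_L[OF w that] by blast
    have fc: "graph_connected (GV X 1 (Suc l) (u @ w)) (GE X 1 (Suc l) (u @ w))" if "u \<in> left_ext X (Suc k) w" for u
      using ft[OF that] unfolding is_tree_def by simp
    have c': "graph_connected (GV X (Suc (Suc k)) (Suc l) w) (GE X (Suc (Suc k)) (Suc l) w)" by (rule ascL[OF c fc])
    have m0: "mm X (Suc k) (Suc l) w = 0" using tree_iff[OF ss c] t by simp
    have m1: "mm X 1 (Suc l) (u @ w) = 0" if "u \<in> left_ext X (Suc k) w" for u
      using tree_iff[OF ss fc[OF that]] ft[OF that] by simp
    have s0: "(\<Sum>u\<in>left_ext X (Suc k) w. mm X 1 (Suc l) (u @ w)) = 0" by (rule sum.neutral) (use m1 in blast)
    have "mm X (Suc (Suc k)) (Suc l) w = 0" using mmL[OF ss, of "Suc k" "Suc l" w] m0 s0 by simp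
    then show "is_tree (GV X (Suc (Suc k)) (Suc l) w) (GE X (Suc (Suc k)) (Suc l) w)" using tree_iff[OF ss c'] by simp
  qed
qed

lemma bwd:
  assumes n: "n \<ge> 1" and H: "\<forall>w\<in>lang_ge X m. is_tree (GV X n n w) (GE X n n w)"
  shows "\<forall>w\<in>lang_ge X m. is_tree (GV X 1 1 w) (GE X 1 1 w)"
proof -
  have C: "graph_connected (GV X k l w) (GE X k l w)" if "w \<in> lang_ge X m" "k \<le> n" "l \<le> n" for k l w
  proof -
    have "graph_connected (GV X n n w) (GE X n n w)" using H that(1) unfolding is_tree_def by blast
    then show ?thesis using proj that(2,3) by blast
  qed
  have P: "mm X k l w \<ge> 0" if "w \<in> lang_ge X m" "k \<le> n" "l \<le> n" for k l w
    using mm_nonneg[OF ss C[OF that]] .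
  have R: "\<forall>w\<in>lang_ge X m. mm X n (n - j) w = 0" if "j < n" for j
    using that
  proof (induction j)
    case 0
    show ?case
    proof
      fix w assume w: "w \<in> lang_ge X m"
      show "mm X n (n - 0) w = 0" using tree_iff[OF ss C[OF w order.refl order.refl]] H w by simp
    qed
  next
    case (Suc j)
    show ?case
    proof
      fix w assume w: "w \<in> lang_ge X m"
      define l where "l = n - Suc j"
      have nj: "n - j = Suc l" using Suc.prems unfolding l_def by simp
      have ln: "l \<le> n" unfolding l_def by simp
      have z: "mm X n (Suc l) w = 0" using Suc w nj by simp
      have e: "mm X n (Suc l) w = mm X n l w + (\<Sum>v\<in>right_ext X l w. mm X n 1 (w @ v))"
        by (rule mmR[OF ss])
      have s: "(\<Sum>v\<in>right_ext X l w. mm X n 1 (w @ v)) \<ge> 0"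
        by (rule sum_nonneg) (use P lang_ge_R[OF w] n in blast)
      have "mm X n l w \<ge> 0" using P[OF w order.refl ln] .
      then show "mm X n (n - Suc j) w = 0" using z e s unfolding l_def by linarith
    qed
  qed
  have R1: "\<forall>w\<in>lang_ge X m. mm X n 1 w = 0"
    using R[of "n - 1"] n by simp
  have L: "\<forall>w\<in>lang_ge X m. mm X (n - j) 1 w = 0" if "j < n" for j
    using that
  proof (induction j)
    case 0 then show ?case using R1 by simp
  next
    case (Suc j)
    show ?case
    proof
      fix w assume w: "w \<in> lang_ge X m"
      define k where "k = n - Suc j"
      have nj: "n - j = Suc k" using Suc.prems unfolding k_def by simp
      have kn: "k \<le> n" unfolding k_def by simp
      have z: "mm X (Suc k) 1 w = 0" using Suc w nj by simp
      have e: "mm X (Suc k) 1 w = mm X k 1 w + (\<Sum>u\<in>left_ext X k w. mm X 1 1 (u @ w))"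
        using mmL[OF ss, of k 1 w] by simp
      have s: "(\<Sum>u\<in>left_ext X k w. mm X 1 1 (u @ w)) \<ge> 0"
        by (rule sum_nonneg) (use P lang_ge_L[OF w] n in blast)
      have "mm X k 1 w \<ge> 0" using P[OF w kn] n by simp
      then show "mm X (n - Suc j) 1 w = 0" using z e s unfolding k_def by linarith
    qed
  qed
  show ?thesis
  proof
    fix w assume w: "w \<in> lang_ge X m"
    have "mm X 1 1 w = 0" using L[of "n - 1"] n w by simp
    then show "is_tree (GV X 1 1 w) (GE X 1 1 w)" using tree_iff[OF ss C[OF w n n]] by simp
  qed
qed

end

theorem mainTheorem17:
  fixes A :: "'a set" and X :: "(int \<Rightarrow> 'a) set" and m :: nat
  assumes "shift_space A X" and "m \<ge> 1"
  shows "(eventually_dendric X m \<longleftrightarrow>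
            (\<forall>n\<ge>1. \<forall>w \<in> lang_ge X m. ext_graph_is_tree X n w))
       \<and> ((\<forall>n\<ge>1. \<forall>w \<in> lang_ge X m. ext_graph_is_tree X n w) \<longleftrightarrow>
            (\<exists>n\<ge>1. \<forall>w \<in> lang_ge X m. ext_graph_is_tree X n w))"
proof -
  note ss = assms(1)
  let ?A = "eventually_dendric X m"
  let ?B = "\<forall>n\<ge>1. \<forall>w \<in> lang_ge X m. ext_graph_is_tree X n w"
  let ?C = "\<exists>n\<ge>1. \<forall>w \<in> lang_ge X m. ext_graph_is_tree X n w"
  have AH: "?A \<longleftrightarrow> (\<forall>w\<in>lang_ge X m. is_tree (GV X 1 1 w) (GE X 1 1 w))"
    unfolding eventually_dendric_def ext_tree_eq ..
  have AB: "?A \<Longrightarrow> ?B"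
  proof (intro allI impI ballI)
    fix n w assume a: ?A and n: "n \<ge> (1::nat)" and w: "w \<in> lang_ge X m"
    obtain k where k: "n = Suc k" using n by (cases n) auto
    have "\<forall>l. \<forall>w\<in>lang_ge X m. is_tree (GV X (Suc k) (Suc l) w) (GE X (Suc k) (Suc l) w)"
      using fwd[OF ss] a AH by blast
    then show "ext_graph_is_tree X n w" unfolding ext_tree_eq using k w by blast
  qed
  have BA: "?B \<Longrightarrow> ?A" unfolding eventually_dendric_def by simp
  have BC: "?B \<Longrightarrow> ?C" by auto
  have CA: "?C \<Longrightarrow> ?A"
  proof -
    assume ?C
    then obtain n where n: "n \<ge> 1" and h: "\<forall>w \<in> lang_ge X m. ext_graph_is_tree X n w" by blast
    have "\<forall>w\<in>lang_ge X m. is_tree (GV X n n w) (GE X n n w)" using h unfolding ext_tree_eq .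
    from bwd[OF ss n this] show ?A using AH by simp
  qed
  show ?thesis using AB BA BC CA by blast
qed


end
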